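(* Let $V\subset H$ be real separable Hilbert spaces with $H$ identified with its dual, let $A\in\mathcal L(V,V')$ be symmetric such that $(y,z)\mapsto\langle Ay,z\rangle_{V',V}$ is a complete scalar product on $V$ (with which $V$ is endowed), with $V\subseteq H$ dense, continuous and compact, and let $A_{\rm rc}(t)\in\mathcal L(H,V')$ for a.e. $t>0$ with $\|A_{\rm rc}\|_{L^\infty(\mathbb R_+,\mathcal L(H,V'))}<+\infty$. Suppose there exist $M\in\mathbb N_+$, $T>0$, $\theta\in(0,1)$, a linearly independent family $\{\Phi_j\mid 1\le j\le M\}\subset\mathrm D(A)'$ with $\|\Phi_j\|_{\mathrm D(A)'}=1$, and maps $v_k\in\mathcal L(V',L^\infty(I_k^T,\mathbb R^M))$, $k\in\mathbb N$, with $\sup_k\|v_k\|_{\mathcal L(V',L^\infty(I_k^T,\mathbb R^M))}\le\mathfrak K$, such that for all $k\in\mathbb N$ and $\mathfrak v\in V'$ the solution of $\dot y+Ay+A_{\rm rc}(t)y=\sum_{j=1}^M (v_{k,j}(\mathfrak v))(t)\Phi_j$, $t\in I_k^T$, $y(kT)=\mathfrak v$, satisfies $\|y(kT+T)\|_{V'}\le\theta\|\mathfrak v\|_{V'}$. Define $\widehat v_k(\mathfrak w)\coloneqq v_k(A\mathfrak w)$ for $\mathfrak w\in V$ and $A_{\rm rc}^A\coloneqq A^{-1}A_{\rm rc}A$. Then: (i) the family $\{A^{-1}\Phi_j\mid 1\le j\le M\}$ is linearly independent and contained in the unit sphere of $H$; (ii) $\widehat v_k\in\mathcal L(V,L^\infty(I_k^T,\mathbb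 R^M))$ and $\sup_{k\in\mathbb N}\|\widehat v_k\|_{\mathcal L(V,L^\infty(I_k^T,\mathbb R^M))}\le\mathfrak K$; (iii) for all $k\in\mathbb N$ and all $\mathfrak w\in V$, the solution of $$\dot w+Aw+A_{\rm rc}^Aw=\sum_{j=1}^M(\widehat v_{k,j}(\mathfrak w))A^{-1}\Phi_j,\qquad w(kT)=\mathfrak w,\qquad t\in I_k^T,$$ satisfies $\|w(kT+T)\|_V\le\theta\|\mathfrak w\|_V$.
   Context: $I_k^T=(kT,kT+T)$. $\mathrm D(A)=\{y\in H\mid Ay\in H\}$ with norm $\|Ay\|_H$, $\mathrm D(A)'$ its dual (with $H\subset V'\subset\mathrm D(A)'$); $V$ has norm $\langle Ay,y\rangle^{1/2}$, so $A\colon V\to V'$ and $A\colon H\to\mathrm D(A)'$ are isometries. $\mathbb N$ includes $0$, $\mathbb N_+=\mathbb N\setminus\{0\}$. *)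

theory Defs
  imports "HOL-Analysis.Analysis"
begin

(* V is the type 'v with its inner product, H is the type 'h, the inclusion
  V \<subseteq> H is the map \<iota>. V' is the dual of V, realised as 'v \<Rightarrow>_L real (operator norm).
  H is identified with its dual and embedded in V' by embH. *)

definition compact_emb :: "('v::real_normed_vector \<Rightarrow> 'h::real_normed_vector) \<Rightarrow> bool" where
  "compact_emb \<iota> \<longleftrightarrow> (\<forall>B. bounded B \<longrightarrow> compact (closure (\<iota> ` B)))"

definition embH :: "('v::real_inner \<Rightarrow> 'h::real_inner) \<Rightarrow> 'h \<Rightarrow> ('v \<Rightarrow>\<^sub>L real)" where
  "embH \<iota> h = Blinfun (\<lambda>z. inner h (\<iota> z))"

definition domA :: "('v::real_inner \<Rightarrow> ('v \<Rightarrow>\<^sub>L real)) \<Rightarrow> ('v \<Rightarrow> 'h::real_inner) \<Rightarrow> 'v set" where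
  "domA A \<iota> = {y. \<exists>h. A y = embH \<iota> h}"

definition AH :: "('v::real_inner \<Rightarrow> ('v \<Rightarrow>\<^sub>L real)) \<Rightarrow> ('v \<Rightarrow> 'h::real_inner) \<Rightarrow> 'v \<Rightarrow> 'h" where
  "AH A \<iota> y = (THE h. A y = embH \<iota> h)"

(* D(A)': bounded linear functionals on D(A) (normed by |Ay|_H); only values on D(A) matter. *)
definition in_DAdual :: "('v::real_inner \<Rightarrow> ('v \<Rightarrow>\<^sub>L real)) \<Rightarrow> ('v \<Rightarrow> 'h::real_inner) \<Rightarrow> ('v \<Rightarrow> real) \<Rightarrow> bool" where
  "in_DAdual A \<iota> \<Phi> \<longleftrightarrow>
     (\<forall>a b x y. x \<in> domA A \<iota> \<longrightarrow> y \<in> domA A \<iota> \<longrightarrow> \<Phi> (a *\<^sub>R x + b *\<^sub>R y) = a * \<Phi> x + b * \<Phi> y)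
     \<and> (\<exists>C. \<forall>y \<in> domA A \<iota>. \<bar>\<Phi> y\<bar> \<le> C * norm (AH A \<iota> y))"

definition DAdual_norm :: "('v::real_inner \<Rightarrow> ('v \<Rightarrow>\<^sub>L real)) \<Rightarrow> ('v \<Rightarrow> 'h::real_inner) \<Rightarrow> ('v \<Rightarrow> real) \<Rightarrow> real" where
  "DAdual_norm A \<iota> \<Phi> = Sup {\<bar>\<Phi> y\<bar> | y. y \<in> domA A \<iota> \<and> norm (AH A \<iota> y) \<le> 1}"

(* A^{-1} : D(A)' \<rightarrow> H  (A extended to H \<rightarrow> D(A)' acts by \<langle>Ah,\<psi>\<rangle> = (h, A\<psi>)_H). *)
definition Ainv_DAd :: "('v::real_inner \<Rightarrow> ('v \<Rightarrow>\<^sub>L real)) \<Rightarrow> ('v \<Rightarrow> 'h::real_inner) \<Rightarrow> ('v \<Rightarrow> real) \<Rightarrow> 'h" where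
  "Ainv_DAd A \<iota> \<Phi> = (THE h. \<forall>\<psi> \<in> domA A \<iota>. inner h (AH A \<iota> \<psi>) = \<Phi> \<psi>)"

definition Ainv_Vd :: "('v \<Rightarrow> ('v \<Rightarrow>\<^sub>L real)) \<Rightarrow> ('v \<Rightarrow>\<^sub>L real) \<Rightarrow> 'v" where
  "Ainv_Vd A f = (THE v. A v = f)"

definition ArcA :: "('v::real_inner \<Rightarrow> ('v \<Rightarrow>\<^sub>L real)) \<Rightarrow> ('v \<Rightarrow> 'h::real_inner)
    \<Rightarrow> (real \<Rightarrow> ('h \<Rightarrow>\<^sub>L ('v \<Rightarrow>\<^sub>L real))) \<Rightarrow> real \<Rightarrow> 'v \<Rightarrow> 'v" where
  "ArcA A \<iota> Arc t w = Ainv_Vd A (blinfun_apply (Arc t) (AH A \<iota> w))"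

definition Ik :: "real \<Rightarrow> nat \<Rightarrow> real set" where
  "Ik T k = {real k * T <..< real k * T + T}"

(* v \<in> L(X, L^\<infinity>(I, R^M)) (values a.e. defined, Euclidean norm on R^M). *)
definition Linf_blin :: "real set \<Rightarrow> ('x::real_normed_vector \<Rightarrow> real \<Rightarrow> real^'m::finite) \<Rightarrow> bool" where
  "Linf_blin I v \<longleftrightarrow>
     (\<forall>f. v f \<in> borel_measurable (lebesgue_on I))
     \<and> (\<forall>a b f g. AE t in lebesgue_on I. v (a *\<^sub>R f + b *\<^sub>R g) t = a *\<^sub>R v f t + b *\<^sub>R v g t)
     \<and> (\<exists>C. \<forall>f. AE t in lebesgue_on I. norm (v f t) \<le> C * norm f)"

definition Linf_opnorm_le :: "real set \<Rightarrow> ('x::real_normed_vector \<Rightarrow> real \<Rightarrow> real^'m::finite) \<Rightarrow> real \<Rightarrow> bool" where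
  "Linf_opnorm_le I v K \<longleftrightarrow> (\<forall>f. AE t in lebesgue_on I. norm (v f t) \<le> K * norm f)"

(* Weak solution on [a,b] of  y' + Ay + B(t)y = \<Sum>_j u_j(t) \<Phi>_j  in D(A)', y(a) = y0 \<in> V':
  y \<in> C([a,b],V') \<inter> L^2((a,b),H), tested against \<psi> \<in> D(A). *)
definition sol_Vd :: "('v::real_inner \<Rightarrow> ('v \<Rightarrow>\<^sub>L real)) \<Rightarrow> ('v \<Rightarrow> 'h::real_inner)
    \<Rightarrow> (real \<Rightarrow> ('h \<Rightarrow>\<^sub>L ('v \<Rightarrow>\<^sub>L real))) \<Rightarrow> ('m::finite \<Rightarrow> 'v \<Rightarrow> real)
    \<Rightarrow> real \<Rightarrow> real \<Rightarrow> (real \<Rightarrow> real^'m) \<Rightarrow> ('v \<Rightarrow>\<^sub>L real) \<Rightarrow> (real \<Rightarrow> ('v \<Rightarrow>\<^sub>L real)) \<Rightarrow> bool" where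
  "sol_Vd A \<iota> B \<Phi> a b u y0 y \<longleftrightarrow>
     continuous_on {a..b} y \<and> y a = y0 \<and>
     (\<exists>yh :: real \<Rightarrow> 'h.
        yh \<in> borel_measurable (lebesgue_on {a<..<b})
      \<and> integrable (lebesgue_on {a<..<b}) (\<lambda>t. (norm (yh t))\<^sup>2)
      \<and> (AE t in lebesgue_on {a<..<b}. y t = embH \<iota> (yh t))
      \<and> (\<forall>\<psi> \<in> domA A \<iota>. \<forall>t \<in> {a..b}.
           let g = (\<lambda>s. - inner (yh s) (AH A \<iota> \<psi>) - blinfun_apply (blinfun_apply (B s) (yh s)) \<psi>
                        + (\<Sum>j\<in>UNIV. u s $ j * \<Phi> j \<psi>))
           in set_integrable lebesgue {a..t} g
              \<and> blinfun_apply (y t) \<psi> - blinfun_apply (y a) \<psi> = (LINT s:{a..t}|lebesgue. g s)))"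

(* Weak solution on [a,b] of  w' + Aw + B(t)w = \<Sum>_j u_j(t) G_j  in H, w(a) = w0 \<in> V:
  w \<in> C([a,b],V), w \<in> L^2((a,b),D(A)), tested against \<psi> \<in> H. *)
definition sol_V :: "('v::real_inner \<Rightarrow> ('v \<Rightarrow>\<^sub>L real)) \<Rightarrow> ('v \<Rightarrow> 'h::real_inner)
    \<Rightarrow> (real \<Rightarrow> 'v \<Rightarrow> 'v) \<Rightarrow> ('m::finite \<Rightarrow> 'h)
    \<Rightarrow> real \<Rightarrow> real \<Rightarrow> (real \<Rightarrow> real^'m) \<Rightarrow> 'v \<Rightarrow> (real \<Rightarrow> 'v) \<Rightarrow> bool" where
  "sol_V A \<iota> B G a b u w0 w \<longleftrightarrow>
     continuous_on {a..b} w \<and> w a = w0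
     \<and> (AE t in lebesgue_on {a<..<b}. w t \<in> domA A \<iota>)
     \<and> (\<lambda>t. AH A \<iota> (w t)) \<in> borel_measurable (lebesgue_on {a<..<b})
     \<and> integrable (lebesgue_on {a<..<b}) (\<lambda>t. (norm (AH A \<iota> (w t)))\<^sup>2)
     \<and> (\<forall>\<psi>. \<forall>t \<in> {a..b}.
          let g = (\<lambda>s. - inner (AH A \<iota> (w s)) \<psi> - inner (\<iota> (B s (w s))) \<psi>
                       + (\<Sum>j\<in>UNIV. u s $ j * inner (G j) \<psi>))
          in set_integrable lebesgue {a..t} g
             \<and> inner (\<iota> (w t)) \<psi> - inner (\<iota> (w a)) \<psi> = (LINT s:{a..t}|lebesgue. g s))"

end

theory Submission imports Defs begin
lemma riesz_exists:
  fixes f :: "'a::{real_inner,complete_space} \<Rightarrow> real"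
  assumes bl: "bounded_linear f"
  shows "\<exists>h. \<forall>x. f x = inner h x"
proof (cases "\<forall>x. f x = 0")
  case True then show ?thesis by (intro exI[of _ 0]) auto
next
  case False
  interpret f: bounded_linear f by fact
  from False obtain e where e: "f e \<noteq> 0" by auto
  define S where "S = {x. f x = 1}"
  have e1: "(1 / f e) *\<^sub>R e \<in> S" using e by (simp add: S_def f.scale)
  define d where "d = Inf (norm ` S)"
  have dlow: "d \<le> norm x" if "x \<in> S" for x
    unfolding d_def by (rule cInf_lower) (use that in \<open>auto intro!: bdd_belowI[where m=0]\<close>)
  have d0: "0 \<le> d" using dlow[OF e1] unfolding d_def
    by (intro cInf_greatest) (use e1 in auto)
  have "\<exists>x\<in>S. norm x < d + 1 / (real n + 1)" for n :: nat
  proof -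
    have "Inf (norm ` S) < d + 1 / (real n + 1)" unfolding d_def by simp
    then obtain r where "r \<in> norm ` S" "r < d + 1 / (real n + 1)"
      using cInf_lessD[of "norm ` S"] e1 by blast
    then show ?thesis by auto
  qed
  then obtain xs where xsS: "\<And>n. xs n \<in> S" and xsn: "\<And>n. norm (xs n) < d + 1 / (real n + 1)"
    by metis
  define eps where "eps n = 1 / (real n + 1)" for n :: nat
  have eps_pos: "0 < eps n" "eps n \<le> 1" for n unfolding eps_def by (auto simp: field_simps)
  have sq: "(norm (xs n))\<^sup>2 \<le> d\<^sup>2 + (2*d+1) * eps n" for n
  proof -
    have "norm (xs n) \<le> d + eps n" using xsn[of n] unfolding eps_def by simp
    then have "(norm (xs n))\<^sup>2 \<le> (d + eps n)\<^sup>2" by (intro power_mono) auto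
    also have "\<dots> \<le> d\<^sup>2 + (2*d+1) * eps n" using eps_pos[of n] d0
      by (simp add: power2_eq_square algebra_simps)
    finally show ?thesis .
  qed
  have mid: "4 * d\<^sup>2 \<le> (norm (xs n + xs m))\<^sup>2" for n m
  proof -
    have "(1/2) *\<^sub>R (xs n + xs m) \<in> S" using xsS[of n] xsS[of m]
      by (simp add: S_def f.scale f.add)
    then have "d \<le> norm ((1/2) *\<^sub>R (xs n + xs m))" by (rule dlow)
    then have "2 * d \<le> norm (xs n + xs m)" by simp
    then have "(2*d)\<^sup>2 \<le> (norm (xs n + xs m))\<^sup>2" by (intro power_mono) (use d0 in auto)
    then show ?thesis by (simp add: power2_eq_square)
  qed
  have par: "(norm (xs n - xs m))\<^sup>2 \<le> 2 * (2*d+1) * (eps n + eps m)" for n m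
  proof -
    have "(norm (xs n - xs m))\<^sup>2 = 2 * (norm (xs n))\<^sup>2 + 2 * (norm (xs m))\<^sup>2 - (norm (xs n + xs m))\<^sup>2"
      by (simp add: power2_norm_eq_inner inner_add_left inner_add_right inner_diff_left inner_diff_right inner_commute)
    then show ?thesis using sq[of n] sq[of m] mid[of n m] by (simp add: algebra_simps)
  qed
  have "Cauchy xs"
  proof (rule metric_CauchyI)
    fix r :: real assume r: "0 < r"
    define c where "c = 4 * (2*d+1)"
    have c0: "0 < c" using d0 unfolding c_def by simp
    obtain N :: nat where N: "c / r\<^sup>2 < real N" using reals_Archimedean2 by blast
    have "\<forall>m\<ge>N. \<forall>n\<ge>N. dist (xs m) (xs n) < r"
    proof (intro allI impI)
      fix m n assume mn: "N \<le> m" "N \<le> n"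
      have em: "eps m \<le> 1 / (real N + 1)" "eps n \<le> 1 / (real N + 1)"
        using mn unfolding eps_def by (auto simp: field_simps)
      have "(norm (xs m - xs n))\<^sup>2 \<le> 2 * (2*d+1) * (eps m + eps n)" by (rule par)
      also have "\<dots> \<le> 2 * (2*d+1) * (2 / (real N + 1))"
        using em d0 by (intro mult_left_mono) auto
      also have "\<dots> = c / (real N + 1)" unfolding c_def by simp
      also have "\<dots> < r\<^sup>2"
      proof -
        have "c < r\<^sup>2 * (real N + 1)" using N r
          by (simp add: field_simps) (smt (verit, best) mult_nonneg_nonneg of_nat_0_le_iff zero_le_power2)
        then show ?thesis by (simp add: field_simps)
      qed
      finally have "(norm (xs m - xs n))\<^sup>2 < r\<^sup>2" .
      then have "norm (xs m - xs n) < r" using r by (simp add: power_less_imp_less_base)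
      then show "dist (xs m) (xs n) < r" by (simp add: dist_norm)
    qed
    then show "\<exists>N. \<forall>m\<ge>N. \<forall>n\<ge>N. dist (xs m) (xs n) < r" by blast
  qed
  then obtain z where lim: "xs \<longlonglongrightarrow> z" using Cauchy_convergent_iff convergent_def by blast
  have "(\<lambda>n. f (xs n)) \<longlonglongrightarrow> f z" by (rule f.tendsto[OF lim])
  moreover have "(\<lambda>n. f (xs n)) = (\<lambda>n. 1)" using xsS by (auto simp: S_def)
  ultimately have fz: "f z = 1" using LIMSEQ_unique tendsto_const by metis
  have epslim: "eps \<longlonglongrightarrow> 0" unfolding eps_def using LIMSEQ_inverse_real_of_nat
    by (simp add: inverse_eq_divide add.commute)
  have "norm z \<le> d"
  proof (rule tendsto_le[OF _ _ tendsto_norm[OF lim]])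
    show "((\<lambda>n. d + eps n) \<longlongrightarrow> d) sequentially" using tendsto_add[OF tendsto_const epslim] by simp
    show "\<forall>\<^sub>F n in sequentially. norm (xs n) \<le> d + eps n" using xsn unfolding eps_def
      by (intro always_eventually allI less_imp_le) simp
  qed simp
  then have zmin: "norm z \<le> norm x" if "x \<in> S" for x using dlow[OF that] by simp
  have orth: "inner z k = 0" if "f k = 0" for k
  proof (cases "k = 0")
    case True then show ?thesis by simp
  next
    case False
    define c where "c = inner z k"
    define q where "q = inner k k"
    have q: "0 < q" using False unfolding q_def by simp
    have "z + (- c / q) *\<^sub>R k \<in> S" using fz that by (simp add: S_def f.add f.scale f.diff)
    then have "norm z \<le> norm (z + (- c / q) *\<^sub>R k)" by (rule zmin)
    then have i1: "(norm z)\<^sup>2 \<le> (norm (z + (- c / q) *\<^sub>R k))\<^sup>2" by (intro power_mono) auto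
    have ex: "(norm (z + t *\<^sub>R k))\<^sup>2 = inner z z + 2 * t * c + t * t * q" for t
      unfolding c_def q_def
      by (simp add: power2_norm_eq_inner inner_add_left inner_add_right inner_commute algebra_simps)
    have "inner z z \<le> inner z z + 2 * (- c / q) * c + (- c / q) * (- c / q) * q"
      using i1 ex[of "- c / q"] power2_norm_eq_inner[of z] by linarith
    then have "0 \<le> 2 * (- c / q) * c + (- c / q) * (- c / q) * q" by simp
    also have "2 * (- c / q) * c + (- c / q) * (- c / q) * q = - (c * c) / q" using q
      by (simp add: field_simps power2_eq_square)
    finally have "0 \<le> - (c * c) / q" .
    then have "c * c \<le> 0" using q by (simp add: divide_nonneg_pos field_simps)
    then show ?thesis unfolding c_def[symmetric] by (auto simp: mult_le_0_iff)
  qed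
  have z0: "z \<noteq> 0" using fz by auto
  have "f x = inner ((1 / inner z z) *\<^sub>R z) x" for x
  proof -
    have "f (x - f x *\<^sub>R z) = 0" using fz by (simp add: f.diff f.scale)
    then have "inner z (x - f x *\<^sub>R z) = 0" by (rule orth)
    then have "inner z x = f x * inner z z" by (simp add: inner_diff_right)
    then show ?thesis using z0 by simp
  qed
  then show ?thesis by blast
qed

lemma inner_unique:
  fixes h1 h2 :: "'a::real_inner"
  assumes "\<forall>x. inner h1 x = inner h2 x" shows "h1 = h2"
proof -
  have "inner (h1 - h2) (h1 - h2) = 0" using assms by (simp add: inner_diff_left)
  then show ?thesis by simp
qed

lemma embH_apply:
  assumes "bounded_linear \<iota>"
  shows "blinfun_apply (embH \<iota> h) z = inner h (\<iota> z)"
proof -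
  have "bounded_linear (\<lambda>z. inner h (\<iota> z))"
    using bounded_linear_compose[OF bounded_linear_inner_right assms] by (simp add: o_def)
  then show ?thesis unfolding embH_def by (simp add: bounded_linear_Blinfun_apply)
qed

lemma embH_inj:
  assumes bl: "bounded_linear \<iota>" and dense: "closure (range \<iota>) = UNIV"
    and eq: "embH \<iota> h1 = embH \<iota> h2"
  shows "h1 = h2"
proof -
  define d where "d = h1 - h2"
  have z: "inner d (\<iota> z) = 0" for z
  proof -
    have "blinfun_apply (embH \<iota> h1) z = blinfun_apply (embH \<iota> h2) z" using eq by simp
    then show ?thesis using embH_apply[OF bl] unfolding d_def by (simp add: inner_diff_left)
  qed
  have cl: "closed {x. inner d x = 0}"
    by (intro closed_Collect_eq continuous_intros)
  have "range \<iota> \<subseteq> {x. inner d x = 0}" using z by auto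
  then have "closure (range \<iota>) \<subseteq> {x. inner d x = 0}" using cl by (rule closure_minimal)
  then have "d \<in> {x. inner d x = 0}" using dense by blast
  then show ?thesis unfolding d_def by simp
qed

lemma A_lin:
  fixes A :: "'v::real_inner \<Rightarrow> ('v \<Rightarrow>\<^sub>L real)"
  assumes A_def: "\<forall>y z. blinfun_apply (A y) z = inner y z"
  shows "A (a *\<^sub>R x + b *\<^sub>R y) = a *\<^sub>R A x + b *\<^sub>R A y"
  by (rule blinfun_eqI) (simp add: A_def inner_add_left plus_blinfun.rep_eq scaleR_blinfun.rep_eq)

lemma A_inj:
  fixes A :: "'v::real_inner \<Rightarrow> ('v \<Rightarrow>\<^sub>L real)"
  assumes A_def: "\<forall>y z. blinfun_apply (A y) z = inner y z" and "A x = A y"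
  shows "x = y"
proof (rule inner_unique, intro allI)
  fix z
  have "blinfun_apply (A x) z = blinfun_apply (A y) z" using assms(2) by simp
  then show "inner x z = inner y z" using A_def by simp
qed

lemma A_surj:
  fixes A :: "'v::{real_inner,complete_space} \<Rightarrow> ('v \<Rightarrow>\<^sub>L real)"
  assumes A_def: "\<forall>y z. blinfun_apply (A y) z = inner y z"
  shows "\<exists>x. A x = F"
proof -
  obtain h where h: "\<forall>x. blinfun_apply F x = inner h x"
    using riesz_exists[OF blinfun.bounded_linear_right] by blast
  have "A h = F" by (rule blinfun_eqI) (simp add: A_def h)
  then show ?thesis by blast
qed

lemma Ainv_Vd:
  fixes A :: "'v::{real_inner,complete_space} \<Rightarrow> ('v \<Rightarrow>\<^sub>L real)"
  assumes A_def: "\<forall>y z. blinfun_apply (A y) z = inner y z"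
  shows "A (Ainv_Vd A F) = F"
proof -
  obtain x where x: "A x = F" using A_surj[OF A_def] by blast
  have "\<exists>!x. A x = F" using x A_inj[OF A_def] by blast
  then show ?thesis unfolding Ainv_Vd_def by (rule theI')
qed

lemma A_norm:
  fixes A :: "'v::real_inner \<Rightarrow> ('v \<Rightarrow>\<^sub>L real)"
  assumes A_def: "\<forall>y z. blinfun_apply (A y) z = inner y z"
  shows "norm (A x) = norm x"
proof (rule antisym)
  show "norm (A x) \<le> norm x"
  proof (rule norm_blinfun_bound)
    fix z show "norm (blinfun_apply (A x) z) \<le> norm x * norm z"
      using Cauchy_Schwarz_ineq2[of x z] by (simp add: A_def)
  qed simp
  have "norm x * norm x = norm (blinfun_apply (A x) x)" using A_def by (simp add: power2_eq_square[symmetric] power2_norm_eq_inner)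
  also have "\<dots> \<le> norm (A x) * norm x" by (rule norm_blinfun)
  finally show "norm x \<le> norm (A x)"
    by (cases "x = 0") (auto simp: mult_le_cancel_right)
qed

lemma AH_eq:
  assumes bl: "bounded_linear \<iota>" and dense: "closure (range \<iota>) = UNIV"
    and y: "y \<in> domA A \<iota>"
  shows "A y = embH \<iota> (AH A \<iota> y)"
proof -
  obtain h where h: "A y = embH \<iota> h" using y unfolding domA_def by blast
  have "\<exists>!h. A y = embH \<iota> h" using h embH_inj[OF bl dense] by metis
  then show ?thesis unfolding AH_def by (rule theI')
qed

lemma AH_surj:
  fixes A :: "'v::{real_inner,complete_space} \<Rightarrow> ('v \<Rightarrow>\<^sub>L real)"
    and \<iota> :: "'v \<Rightarrow> 'h::real_inner"
  assumes A_def: "\<forall>y z. blinfun_apply (A y) z = inner y z"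
    and bl: "bounded_linear \<iota>" and dense: "closure (range \<iota>) = UNIV"
  shows "Ainv_Vd A (embH \<iota> h) \<in> domA A \<iota>" "AH A \<iota> (Ainv_Vd A (embH \<iota> h)) = h"
proof -
  have e: "A (Ainv_Vd A (embH \<iota> h)) = embH \<iota> h" by (rule Ainv_Vd[OF A_def])
  then show "Ainv_Vd A (embH \<iota> h) \<in> domA A \<iota>" unfolding domA_def by blast
  then have "A (Ainv_Vd A (embH \<iota> h)) = embH \<iota> (AH A \<iota> (Ainv_Vd A (embH \<iota> h)))"
    by (rule AH_eq[OF bl dense])
  with e show "AH A \<iota> (Ainv_Vd A (embH \<iota> h)) = h" using embH_inj[OF bl dense] by metis
qed

lemma domA_inner:
  fixes A :: "'v::real_inner \<Rightarrow> ('v \<Rightarrow>\<^sub>L real)"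
  assumes A_def: "\<forall>y z. blinfun_apply (A y) z = inner y z"
    and bl: "bounded_linear \<iota>" and dense: "closure (range \<iota>) = UNIV"
    and psi: "\<psi> \<in> domA A \<iota>"
  shows "inner (\<iota> x) (AH A \<iota> \<psi>) = inner \<psi> x"
proof -
  have "inner \<psi> x = blinfun_apply (A \<psi>) x" using A_def by simp
  also have "\<dots> = inner (AH A \<iota> \<psi>) (\<iota> x)" by (simp add: AH_eq[OF bl dense psi] embH_apply[OF bl])
  finally show ?thesis by (simp add: inner_commute)
qed

lemma Ainv_DAd_char:
  fixes A :: "'v::{real_inner,complete_space} \<Rightarrow> ('v \<Rightarrow>\<^sub>L real)"
    and \<iota> :: "'v \<Rightarrow> 'h::{real_inner,complete_space}"
  assumes A_def: "\<forall>y z. blinfun_apply (A y) z = inner y z"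
    and bl: "bounded_linear \<iota>" and dense: "closure (range \<iota>) = UNIV"
    and Phi: "in_DAdual A \<iota> \<Phi>"
  shows "\<forall>\<psi>\<in>domA A \<iota>. inner (Ainv_DAd A \<iota> \<Phi>) (AH A \<iota> \<psi>) = \<Phi> \<psi>"
    "\<forall>h. inner (Ainv_DAd A \<iota> \<Phi>) h = \<Phi> (Ainv_Vd A (embH \<iota> h))"
proof -
  define Y where "Y h = Ainv_Vd A (embH \<iota> h)" for h
  have Yd: "Y h \<in> domA A \<iota>" and YA: "AH A \<iota> (Y h) = h" for h
    unfolding Y_def using AH_surj[OF A_def bl dense] by auto
  have embH_lin: "embH \<iota> (a *\<^sub>R x + b *\<^sub>R y) = a *\<^sub>R embH \<iota> x + b *\<^sub>R embH \<iota> y" for a b x y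
    by (rule blinfun_eqI) (simp add: embH_apply[OF bl] inner_add_left plus_blinfun.rep_eq scaleR_blinfun.rep_eq)
  have Ylin: "Y (a *\<^sub>R x + b *\<^sub>R y) = a *\<^sub>R Y x + b *\<^sub>R Y y" for a b x y
  proof (rule A_inj[OF A_def])
    show "A (Y (a *\<^sub>R x + b *\<^sub>R y)) = A (a *\<^sub>R Y x + b *\<^sub>R Y y)"
      unfolding A_lin[OF A_def] Y_def Ainv_Vd[OF A_def] embH_lin ..
  qed
  from Phi obtain C where lin: "\<And>a b x y. x \<in> domA A \<iota> \<Longrightarrow> y \<in> domA A \<iota> \<Longrightarrow>
      \<Phi> (a *\<^sub>R x + b *\<^sub>R y) = a * \<Phi> x + b * \<Phi> y"
    and C: "\<forall>y \<in> domA A \<iota>. \<bar>\<Phi> y\<bar> \<le> C * norm (AH A \<iota> y)"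
    unfolding in_DAdual_def by blast
  define g where "g h = \<Phi> (Y h)" for h
  have glin: "g (a *\<^sub>R x + b *\<^sub>R y) = a * g x + b * g y" for a b x y
    unfolding g_def Ylin using lin[OF Yd Yd] .
  have "bounded_linear g"
  proof (rule bounded_linear_intro[where K = C])
    show "g (x + y) = g x + g y" for x y using glin[of 1 x 1 y] by simp
    show "g (r *\<^sub>R x) = r *\<^sub>R g x" for r x using glin[of r x 0 x] by simp
    show "norm (g x) \<le> norm x * C" for x using C Yd[of x] YA[of x] unfolding g_def
      by (auto simp: mult.commute)
  qed
  then obtain h0 where h0: "\<forall>x. g x = inner h0 x" using riesz_exists by blast
  have YAH: "Y (AH A \<iota> \<psi>) = \<psi>" if "\<psi> \<in> domA A \<iota>" for \<psi>
    unfolding Y_def AH_eq[OF bl dense that, symmetric]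
    by (rule A_inj[OF A_def]) (rule Ainv_Vd[OF A_def])
  have P: "\<forall>\<psi>\<in>domA A \<iota>. inner h0 (AH A \<iota> \<psi>) = \<Phi> \<psi>"
    using h0 YAH unfolding g_def by metis
  have uniq: "h = h0" if "\<forall>\<psi>\<in>domA A \<iota>. inner h (AH A \<iota> \<psi>) = \<Phi> \<psi>" for h
  proof (rule inner_unique, intro allI)
    fix x
    have "inner h x = inner h (AH A \<iota> (Y x))" using YA by simp
    also have "\<dots> = g x" using that Yd unfolding g_def by blast
    finally show "inner h x = inner h0 x" using h0 by simp
  qed
  have "Ainv_DAd A \<iota> \<Phi> = h0" unfolding Ainv_DAd_def
    using P uniq by (rule the_equality)
  then show "\<forall>\<psi>\<in>domA A \<iota>. inner (Ainv_DAd A \<iota> \<Phi>) (AH A \<iota> \<psi>) = \<Phi> \<psi>"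
    "\<forall>h. inner (Ainv_DAd A \<iota> \<Phi>) h = \<Phi> (Ainv_Vd A (embH \<iota> h))"
    using P h0 unfolding g_def Y_def by auto
qed

theorem corollary3p3:
  fixes \<iota> :: "'v::{real_inner,complete_space} \<Rightarrow> 'h::{real_inner,complete_space}"
    and A :: "'v \<Rightarrow> ('v \<Rightarrow>\<^sub>L real)"
    and Arc :: "real \<Rightarrow> ('h \<Rightarrow>\<^sub>L ('v \<Rightarrow>\<^sub>L real))"
    and \<Phi> :: "'m::finite \<Rightarrow> 'v \<Rightarrow> real"
    and v :: "nat \<Rightarrow> ('v \<Rightarrow>\<^sub>L real) \<Rightarrow> real \<Rightarrow> real^'m"
    and T \<theta> K :: real
  assumes sepV: "\<exists>D::'v set. countable D \<and> closure D = UNIV"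
    and sepH: "\<exists>D::'h set. countable D \<and> closure D = UNIV"
    and A_def: "\<forall>y z. blinfun_apply (A y) z = inner y z"
    and emb_cont: "bounded_linear \<iota>" and emb_inj: "inj \<iota>"
    and emb_dense: "closure (range \<iota>) = UNIV" and emb_compact: "compact_emb \<iota>"
    and Arc_meas: "Arc \<in> borel_measurable (lebesgue_on {0<..})"
    and Arc_bdd: "\<exists>C. AE t in lebesgue_on {0<..}. norm (Arc t) \<le> C"
    and T_pos: "T > 0" and theta: "0 < \<theta>" "\<theta> < 1"
    and Phi_DAd: "\<forall>j. in_DAdual A \<iota> (\<Phi> j)"
    and Phi_norm: "\<forall>j. DAdual_norm A \<iota> (\<Phi> j) = 1"
    and Phi_indep: "\<forall>c. (\<forall>\<psi> \<in> domA A \<iota>. (\<Sum>j\<in>UNIV. c j * \<Phi> j \<psi>) = 0) \<longrightarrow> (\<forall>j. c j = 0)"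
    and v_lin: "\<forall>k. Linf_blin (Ik T k) (v k)"
    and v_bdd: "\<forall>k. Linf_opnorm_le (Ik T k) (v k) K"
    and stab: "\<forall>k f y. sol_Vd A \<iota> Arc \<Phi> (real k * T) (real k * T + T) (v k f) f y
                 \<longrightarrow> norm (y (real k * T + T)) \<le> \<theta> * norm f"
  shows "((\<forall>c. (\<Sum>j\<in>UNIV. c j *\<^sub>R Ainv_DAd A \<iota> (\<Phi> j)) = 0 \<longrightarrow> (\<forall>j. c j = 0))
           \<and> (\<forall>j. norm (Ainv_DAd A \<iota> (\<Phi> j)) = 1))
         \<and> (\<forall>k. Linf_blin (Ik T k) (\<lambda>w. v k (A w)) \<and> Linf_opnorm_le (Ik T k) (\<lambda>w. v k (A w)) K)
         \<and> (\<forall>k w0 w. sol_V A \<iota> (ArcA A \<iota> Arc) (\<lambda>j. Ainv_DAd A \<iota> (\<Phi> j)) (real k * T) (real k * T + T)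
                   (v k (A w0)) w0 w
                 \<longrightarrow> norm (w (real k * T + T)) \<le> \<theta> * norm w0)"
proof -
  note bl = emb_cont and dense = emb_dense
  define h where "h j = Ainv_DAd A \<iota> (\<Phi> j)" for j
  have hchar: "\<forall>\<psi>\<in>domA A \<iota>. inner (h j) (AH A \<iota> \<psi>) = \<Phi> j \<psi>" for j
    unfolding h_def using Ainv_DAd_char(1)[OF A_def bl dense] Phi_DAd by blast
  define Y where "Y x = Ainv_Vd A (embH \<iota> x)" for x
  have Yd: "Y x \<in> domA A \<iota>" and YA: "AH A \<iota> (Y x) = x" for x
    unfolding Y_def using AH_surj[OF A_def bl dense] by auto
  have part1a: "\<forall>c. (\<Sum>j\<in>UNIV. c j *\<^sub>R h j) = 0 \<longrightarrow> (\<forall>j. c j = 0)"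
  proof (rule allI, rule impI)
    fix c :: "'m \<Rightarrow> real" assume c: "(\<Sum>j\<in>UNIV. c j *\<^sub>R h j) = 0"
    have "\<forall>\<psi> \<in> domA A \<iota>. (\<Sum>j\<in>UNIV. c j * \<Phi> j \<psi>) = 0"
    proof
      fix \<psi> assume p: "\<psi> \<in> domA A \<iota>"
      have "(\<Sum>j\<in>UNIV. c j * \<Phi> j \<psi>) = (\<Sum>j\<in>UNIV. c j * inner (h j) (AH A \<iota> \<psi>))"
        using hchar p by simp
      also have "\<dots> = inner (\<Sum>j\<in>UNIV. c j *\<^sub>R h j) (AH A \<iota> \<psi>)"
        by (simp add: inner_sum_left)
      finally show "(\<Sum>j\<in>UNIV. c j * \<Phi> j \<psi>) = 0" using c by simp
    qed
    then show "\<forall>j. c j = 0" using Phi_indep by blast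
  qed
  have part1b: "norm (h j) = 1" for j
  proof -
    define S where "S = {\<bar>\<Phi> j y\<bar> | y. y \<in> domA A \<iota> \<and> norm (AH A \<iota> y) \<le> 1}"
    have "Sup S = norm (h j)"
    proof (rule cSup_eq_maximum)
      have "inner (h j) (sgn (h j)) = norm (h j)"
        by (cases "h j = 0") (auto simp: sgn_div_norm power2_norm_eq_inner[symmetric] power2_eq_square)
      moreover have "\<Phi> j (Y (sgn (h j))) = inner (h j) (AH A \<iota> (Y (sgn (h j))))"
        using hchar[of j] Yd by metis
      ultimately have "\<bar>\<Phi> j (Y (sgn (h j)))\<bar> = norm (h j)" using YA by simp
      moreover have "norm (AH A \<iota> (Y (sgn (h j)))) \<le> 1" using YA by (simp add: norm_sgn)
      ultimately show "norm (h j) \<in> S" unfolding S_def using Yd by force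
      show "x \<le> norm (h j)" if "x \<in> S" for x
      proof -
        from that obtain y where y: "y \<in> domA A \<iota>" "norm (AH A \<iota> y) \<le> 1" "x = \<bar>\<Phi> j y\<bar>"
          unfolding S_def by blast
        have "x = \<bar>inner (h j) (AH A \<iota> y)\<bar>" using y hchar by simp
        also have "\<dots> \<le> norm (h j) * norm (AH A \<iota> y)" by (rule Cauchy_Schwarz_ineq2)
        also have "\<dots> \<le> norm (h j)" using y(2) by (simp add: mult_left_le)
        finally show ?thesis .
      qed
    qed
    then show ?thesis using Phi_norm unfolding DAdual_norm_def S_def by simp
  qed
  have part2: "Linf_blin (Ik T k) (\<lambda>w. v k (A w)) \<and> Linf_opnorm_le (Ik T k) (\<lambda>w. v k (A w)) K" for k
  proof
    have vl: "Linf_blin (Ik T k) (v k)" using v_lin by blast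
    show "Linf_blin (Ik T k) (\<lambda>w. v k (A w))"
      unfolding Linf_blin_def
    proof (intro conjI allI)
      show "(\<lambda>t. v k (A f) t) \<in> borel_measurable (lebesgue_on (Ik T k))" for f
        using vl unfolding Linf_blin_def by blast
      show "AE t in lebesgue_on (Ik T k). v k (A (a *\<^sub>R f + b *\<^sub>R g)) t = a *\<^sub>R v k (A f) t + b *\<^sub>R v k (A g) t"
        for a b f g using vl unfolding Linf_blin_def A_lin[OF A_def] by blast
      from vl obtain C where "\<forall>f. AE t in lebesgue_on (Ik T k). norm (v k f t) \<le> C * norm f"
        unfolding Linf_blin_def by blast
      then show "\<exists>C. \<forall>f. AE t in lebesgue_on (Ik T k). norm (v k (A f) t) \<le> C * norm f"
        by (metis A_norm[OF A_def])
    qed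
    show "Linf_opnorm_le (Ik T k) (\<lambda>w. v k (A w)) K"
      using v_bdd unfolding Linf_opnorm_le_def by (metis A_norm[OF A_def])
  qed
  have part3: "norm (w (real k * T + T)) \<le> \<theta> * norm w0"
    if sol: "sol_V A \<iota> (ArcA A \<iota> Arc) h (real k * T) (real k * T + T) (v k (A w0)) w0 w" for k w0 w
  proof -
    define a where "a = real k * T"
    define b where "b = real k * T + T"
    define u where "u = v k (A w0)"
    define y where "y t = A (w t)" for t
    have sol': "sol_V A \<iota> (ArcA A \<iota> Arc) h a b u w0 w" using sol unfolding a_def b_def u_def .
    have sV: "continuous_on {a..b} w" "w a = w0"
      "AE t in lebesgue_on {a<..<b}. w t \<in> domA A \<iota>"
      "(\<lambda>t. AH A \<iota> (w t)) \<in> borel_measurable (lebesgue_on {a<..<b})"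
      "integrable (lebesgue_on {a<..<b}) (\<lambda>t. (norm (AH A \<iota> (w t)))\<^sup>2)"
      and weak: "\<forall>\<psi>. \<forall>t \<in> {a..b}.
          let g = (\<lambda>s. - inner (AH A \<iota> (w s)) \<psi> - inner (\<iota> (ArcA A \<iota> Arc s (w s))) \<psi>
                       + (\<Sum>j\<in>UNIV. u s $ j * inner (h j) \<psi>))
          in set_integrable lebesgue {a..t} g
             \<and> inner (\<iota> (w t)) \<psi> - inner (\<iota> (w a)) \<psi> = (LINT s:{a..t}|lebesgue. g s)"
      using sol' unfolding sol_V_def by blast+
    have Aeq: "A = blinfun_inner_right"
      by (intro ext blinfun_eqI) (simp add: A_def)
    have "sol_Vd A \<iota> Arc \<Phi> a b u (A w0) y"
      unfolding sol_Vd_def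
    proof (intro conjI)
      show "continuous_on {a..b} y" unfolding y_def Aeq
        using continuous_on_compose[OF sV(1) linear_continuous_on[OF bounded_linear_blinfun_inner_right]]
        by (simp add: o_def)
      show "y a = A w0" using sV(2) by (simp add: y_def)
      show "\<exists>yh :: real \<Rightarrow> 'h.
        yh \<in> borel_measurable (lebesgue_on {a<..<b})
      \<and> integrable (lebesgue_on {a<..<b}) (\<lambda>t. (norm (yh t))\<^sup>2)
      \<and> (AE t in lebesgue_on {a<..<b}. y t = embH \<iota> (yh t))
      \<and> (\<forall>\<psi> \<in> domA A \<iota>. \<forall>t \<in> {a..b}.
           let g = (\<lambda>s. - inner (yh s) (AH A \<iota> \<psi>) - blinfun_apply (blinfun_apply (Arc s) (yh s)) \<psi>
                        + (\<Sum>j\<in>UNIV. u s $ j * \<Phi> j \<psi>))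
           in set_integrable lebesgue {a..t} g
              \<and> blinfun_apply (y t) \<psi> - blinfun_apply (y a) \<psi> = (LINT s:{a..t}|lebesgue. g s))"
      proof (intro exI conjI ballI)
        show "(\<lambda>t. AH A \<iota> (w t)) \<in> borel_measurable (lebesgue_on {a<..<b})" by (rule sV(4))
        show "integrable (lebesgue_on {a<..<b}) (\<lambda>t. (norm (AH A \<iota> (w t)))\<^sup>2)" by (rule sV(5))
        show "AE t in lebesgue_on {a<..<b}. y t = embH \<iota> (AH A \<iota> (w t))"
          using sV(3) by eventually_elim (simp add: y_def AH_eq[OF bl dense])
        fix \<psi> t assume p: "\<psi> \<in> domA A \<iota>" and t: "t \<in> {a..b}"
        have ArcAeq: "inner (\<iota> (ArcA A \<iota> Arc s x)) (AH A \<iota> \<psi>) = blinfun_apply (blinfun_apply (Arc s) (AH A \<iota> x)) \<psi>" for s x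
        proof -
          have "inner (\<iota> (ArcA A \<iota> Arc s x)) (AH A \<iota> \<psi>) = inner \<psi> (ArcA A \<iota> Arc s x)"
            by (rule domA_inner[OF A_def bl dense p])
          also have "\<dots> = blinfun_apply (A (ArcA A \<iota> Arc s x)) \<psi>" by (simp add: A_def inner_commute)
          also have "\<dots> = blinfun_apply (blinfun_apply (Arc s) (AH A \<iota> x)) \<psi>"
            unfolding ArcA_def Ainv_Vd[OF A_def] ..
          finally show ?thesis .
        qed
        have geq: "(\<lambda>s. - inner (AH A \<iota> (w s)) (AH A \<iota> \<psi>) - inner (\<iota> (ArcA A \<iota> Arc s (w s))) (AH A \<iota> \<psi>)
                       + (\<Sum>j\<in>UNIV. u s $ j * inner (h j) (AH A \<iota> \<psi>)))
          = (\<lambda>s. - inner (AH A \<iota> (w s)) (AH A \<iota> \<psi>) - blinfun_apply (blinfun_apply (Arc s) (AH A \<iota> (w s))) \<psi>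
                        + (\<Sum>j\<in>UNIV. u s $ j * \<Phi> j \<psi>))"
          using ArcAeq hchar p by simp
        have lhs: "inner (\<iota> (w t)) (AH A \<iota> \<psi>) - inner (\<iota> (w a)) (AH A \<iota> \<psi>)
            = blinfun_apply (y t) \<psi> - blinfun_apply (y a) \<psi>"
          using domA_inner[OF A_def bl dense p] by (simp add: y_def A_def inner_commute)
        show "let g = (\<lambda>s. - inner (AH A \<iota> (w s)) (AH A \<iota> \<psi>) - blinfun_apply (blinfun_apply (Arc s) (AH A \<iota> (w s))) \<psi>
                        + (\<Sum>j\<in>UNIV. u s $ j * \<Phi> j \<psi>))
           in set_integrable lebesgue {a..t} g
              \<and> blinfun_apply (y t) \<psi> - blinfun_apply (y a) \<psi> = (LINT s:{a..t}|lebesgue. g s)"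
          using weak[rule_format, OF t, of "AH A \<iota> \<psi>"] unfolding Let_def geq lhs .
      qed
    qed
    then have "norm (y b) \<le> \<theta> * norm (A w0)"
      using stab unfolding a_def b_def u_def by blast
    then show ?thesis unfolding y_def b_def A_norm[OF A_def] .
  qed
  show ?thesis
    using part1a part1b part2 part3 unfolding h_def by blast
qed

end
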